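(* Let $(X_n)_{n\ge0}$ be the Kendall random walk with step distribution $\nu\in\mathcal P_s$, $\nu(\{0\})=0$, let $a\ge0$, and let $\tau^{-}_{a,w}=\min\{n\ge1: X_n\le a\}$ (weak descending ladder epoch, $\min\emptyset=\infty$). Then $\mathbb P(\tau^-_{a,w}=1)=F(a)$ and for every $n\ge0$ $$\mathbb P(\tau^-_{a,w}>n+1)=\frac1{2^n}\big(1-F(a)\big).$$
   Context: Fix $\alpha>0$. $\mathcal P_s$ is the set of symmetric Borel probability measures on $\mathbb R$. For $x\in\mathbb R$, $\widetilde\delta_x=\frac12(\delta_x+\delta_{-x})$. For a probability measure $\lambda=\mathcal L(X)$ and $c>0$, $T_c\lambda=\mathcal L(cX)$, and $T_0\lambda=\delta_0$. $\widetilde\pi_{2\alpha}$ is the symmetric Pareto probability measure with density $\alpha|y|^{-2\alpha-1}\mathbf 1_{\{|y|\ge1\}}$. The Kendall convolution $\vartriangle_\alpha$ on $\mathcal P_s$ is defined by $\widetilde\delta_x\vartriangle_\alpha\widetilde\delta_y=T_M\big(\varrho^\alpha\widetilde\pi_{2\alpha}+(1-\varrho^\alpha)\widetilde\delta_1\big)$ where $M=\max(|x|,|y|)$, $m=\min(|x|,|y|)$, $\varrho=m/M$ (and $\varrho=0$ if $M=0$), extended by $(\nu_1\vartriangle_\alpha\nu_2)(A)=\int\int(\widetilde\delta_x\vartriangle_\alpha\widetilde\delta_y)(A)\,\nu_1(dx)\nu_2(dy)$. For $x\in\mathbb R$ and $\mu\in\mathcal P_s$ we write $\delta_x\vartriangle_\alpha\mu:=\widetilde\delta_x\vartriangle_\alpha\mu$.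 $F(t)=\nu((-\infty,t])$. The Kendall random walk with step distribution $\nu$ is the Markov chain $(X_n)_{n\ge0}$ with $X_0=0$ and transition kernel $\mathbb P(X_{k+1}\in A\mid X_k=x)=(\delta_x\vartriangle_\alpha\nu)(A)$. *)

theory Defs
  imports "HOL-Probability.Probability"
begin

definition sym_prob :: "real measure \<Rightarrow> bool" where
  "sym_prob \<nu> \<longleftrightarrow> prob_space \<nu> \<and> sets \<nu> = sets borel \<and>
     (\<forall>A\<in>sets borel. measure \<nu> (uminus -` A) = measure \<nu> A)"

definition cdf_of :: "real measure \<Rightarrow> real \<Rightarrow> real" where
  "cdf_of \<nu> t = measure \<nu> {..t}"

definition sym_pareto :: "real \<Rightarrow> real measure" where
  "sym_pareto \<alpha> = density lborel
     (\<lambda>y. ennreal (if 1 \<le> \<bar>y\<bar> then \<alpha> * \<bar>y\<bar> powr (- 2 * \<alpha> - 1) else 0))"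

definition dilate :: "real \<Rightarrow> real measure \<Rightarrow> real measure" where
  "dilate c \<mu> = (if c = 0 then return borel 0 else distr \<mu> borel (\<lambda>y. c * y))"

definition sym_delta :: "real \<Rightarrow> real set \<Rightarrow> real" where
  "sym_delta x A = (indicator A x + indicator A (- x)) / 2"

text \<open>(sym_delta x) Kendall-convolved with (sym_delta y), evaluated on a set A:
  T_M (rho^alpha pi + (1 - rho^alpha) sym_delta 1).\<close>
definition kendall_dd :: "real \<Rightarrow> real \<Rightarrow> real \<Rightarrow> real set \<Rightarrow> real" where
  "kendall_dd \<alpha> x y A =
     (let M = max \<bar>x\<bar> \<bar>y\<bar>; m = min \<bar>x\<bar> \<bar>y\<bar>; \<rho> = (if M = 0 then 0 else m / M) in
      if M = 0 then indicator A 0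
      else \<rho> powr \<alpha> * measure (dilate M (sym_pareto \<alpha>)) A
           + (1 - \<rho> powr \<alpha>) * sym_delta M A)"

text \<open>(delta_x Kendall-convolved with nu)(A) := (sym_delta x Kendall-convolved with nu)(A),
  obtained by integrating kendall_dd against sym_delta x (du) and nu (dy).\<close>
definition kendall_kernel :: "real \<Rightarrow> real measure \<Rightarrow> real \<Rightarrow> real set \<Rightarrow> real" where
  "kendall_kernel \<alpha> \<nu> x A =
     (\<integral>y. (kendall_dd \<alpha> x y A + kendall_dd \<alpha> (- x) y A) / 2 \<partial>\<nu>)"

text \<open>X is a Kendall random walk on the probability space M with step distribution nu:
  a Markov chain started at 0 with transition kernel (delta_x Kendall-convolved with nu),
  characterised through its finite-dimensional distributions.\<close>
definition kendall_rw :: "real \<Rightarrow> real measure \<Rightarrow> 'a measure \<Rightarrow> (nat \<Rightarrow> 'a \<Rightarrow> real) \<Rightarrow> bool" where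
  "kendall_rw \<alpha> \<nu> M X \<longleftrightarrow>
     prob_space M \<and> (\<forall>n. X n \<in> borel_measurable M) \<and> (\<forall>\<omega>\<in>space M. X 0 \<omega> = 0) \<and>
     (\<forall>n A B. (\<forall>i\<le>n. A i \<in> sets borel) \<longrightarrow> B \<in> sets borel \<longrightarrow>
        measure M {\<omega>\<in>space M. (\<forall>i\<le>n. X i \<omega> \<in> A i) \<and> X (Suc n) \<omega> \<in> B}
        = (\<integral>\<omega>. indicator {\<omega>\<in>space M. \<forall>i\<le>n. X i \<omega> \<in> A i} \<omega>
                 * kendall_kernel \<alpha> \<nu> (X n \<omega>) B \<partial>M))"

definition weak_ladder :: "real \<Rightarrow> (nat \<Rightarrow> 'a \<Rightarrow> real) \<Rightarrow> 'a \<Rightarrow> enat" where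
  "weak_ladder a X \<omega> =
     (if \<exists>n\<ge>1. X n \<omega> \<le> a then enat (LEAST n. n \<ge> 1 \<and> X n \<omega> \<le> a) else \<infinity>)"

end

theory Submission
  imports Defs
begin

lemma pareto_tail:
  assumes "\<alpha> > 0" "0 \<le> c" "c < 1"
  shows "measure (sym_pareto \<alpha>) {c<..} = 1/2"
proof -
  have eq: "\<And>y. ennreal (if 1 \<le> \<bar>y\<bar> then \<alpha> * \<bar>y\<bar> powr (- 2 * \<alpha> - 1) else 0) * indicator {c<..} y
      = ennreal (if 1 \<le> y then \<alpha> * y powr (- 2 * \<alpha> - 1) else 0) * indicator {1..} y"
    using assms by (auto simp: indicator_def)
  have "emeasure (sym_pareto \<alpha>) {c<..} = (\<integral>\<^sup>+y. ennreal (if 1 \<le> y then \<alpha> * y powr (- 2 * \<alpha> - 1) else 0) * indicator {1..} y \<partial>lborel)"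
    unfolding sym_pareto_def by (subst emeasure_density) (auto simp: eq)
  also have "\<dots> = ennreal (0 - (- (1/2) * 1 powr (-2*\<alpha>)))"
  proof (rule nn_integral_FTC_atLeast[where F="\<lambda>y. - (1/2) * y powr (-2*\<alpha>)" and T=0])
    show "(\<lambda>y. if 1 \<le> y then \<alpha> * y powr (- 2 * \<alpha> - 1) else 0) \<in> borel_measurable borel"
      by measurable
    fix x :: real assume x: "1 \<le> x"
    show "0 \<le> (if 1 \<le> x then \<alpha> * x powr (- 2 * \<alpha> - 1) else 0)" using assms by auto
    show "((\<lambda>y. - (1/2) * y powr (-2*\<alpha>)) has_real_derivative (if 1 \<le> x then \<alpha> * x powr (- 2 * \<alpha> - 1) else 0)) (at x)"
      using x assms by (auto intro!: derivative_eq_intros simp: field_simps)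
  next
    show "((\<lambda>y. - (1/2) * y powr (-2*\<alpha>)) \<longlongrightarrow> 0) at_top"
      using assms by (intro tendsto_mult_right_zero tendsto_neg_powr) (auto simp: filterlim_ident)
  qed
  also have "\<dots> = ennreal (1/2)" by simp
  finally have h: "emeasure (sym_pareto \<alpha>) {c<..} = ennreal (1/2)" .
  have "measure (sym_pareto \<alpha>) {c<..} = enn2real (ennreal (1/2))" using h by (simp only: measure_def)
  also have "\<dots> = 1/2" by (rule enn2real_ennreal) simp
  finally show ?thesis .
qed

lemma dd_half:
  assumes "\<alpha> > 0" "0 \<le> a" "a < \<bar>x\<bar>"
  shows "kendall_dd \<alpha> x y {a<..} = 1/2"
proof -
  define Mx where "Mx = max \<bar>x\<bar> \<bar>y\<bar>"
  have Mpos: "Mx > a" "Mx > 0" using assms by (auto simp: Mx_def)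
  have d: "measure (dilate Mx (sym_pareto \<alpha>)) {a<..} = 1/2"
  proof -
    have sp: "space (sym_pareto \<alpha>) = UNIV" by (simp add: sym_pareto_def)
    have "(\<lambda>y. Mx * y) -` {a<..} = {a/Mx<..}"
      using Mpos by (auto simp: field_simps)
    then have "measure (dilate Mx (sym_pareto \<alpha>)) {a<..} = measure (sym_pareto \<alpha>) {a/Mx<..}"
      using Mpos unfolding dilate_def by simp (subst measure_distr, auto simp: sp sym_pareto_def)
    also have "\<dots> = 1/2" using Mpos assms by (intro pareto_tail) (auto simp: field_simps)
    finally show ?thesis .
  qed
  have s: "sym_delta Mx {a<..} = 1/2"
    using Mpos assms by (simp add: sym_delta_def)
  show ?thesis unfolding kendall_dd_def Let_def Mx_def[symmetric]
    using Mpos d s by (simp add: algebra_simps)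
qed

lemma kernel_half:
  assumes "\<alpha> > 0" "0 \<le> a" "a < \<bar>x\<bar>" "prob_space \<nu>"
  shows "kendall_kernel \<alpha> \<nu> x {a<..} = 1/2"
proof -
  have "kendall_kernel \<alpha> \<nu> x {a<..} = (\<integral>y. 1/2 \<partial>\<nu>)"
    unfolding kendall_kernel_def using assms by (intro Bochner_Integration.integral_cong) (auto simp: dd_half)
  then show ?thesis using assms prob_space.prob_space by simp
qed

lemma kernel_zero:
  assumes "0 \<le> a" "sym_prob \<nu>"
  shows "kendall_kernel \<alpha> \<nu> 0 {a<..} = 1 - cdf_of \<nu> a"
proof -
  have ps: "prob_space \<nu>" and sb: "sets \<nu> = sets borel"
    and sym: "\<And>A. A \<in> sets borel \<Longrightarrow> measure \<nu> (uminus -` A) = measure \<nu> A"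
    using assms(2) by (auto simp: sym_prob_def)
  have sp: "space \<nu> = UNIV" using sets_eq_imp_space_eq[OF sb] by simp
  have "kendall_kernel \<alpha> \<nu> 0 {a<..} = (\<integral>y. indicator {y. a < \<bar>y\<bar>} y / 2 \<partial>\<nu>)"
    unfolding kendall_kernel_def
    by (intro Bochner_Integration.integral_cong)
       (use assms in \<open>auto simp: kendall_dd_def Let_def sym_delta_def indicator_def\<close>)
  also have "\<dots> = measure \<nu> {y. a < \<bar>y\<bar>} / 2"
    using sp by simp
  also have "{y. a < \<bar>y\<bar>} = {a<..} \<union> {..< -a}" by auto
  also have "measure \<nu> ({a<..} \<union> {..< -a}) = measure \<nu> {a<..} + measure \<nu> {..< -a}"
    using assms sb by (intro finite_measure.finite_measure_Union[OF prob_space.axioms(1)[OF ps]]) auto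
  also have "measure \<nu> {..< -a} = measure \<nu> {a<..}"
  proof -
    have "uminus -` {a<..} = {..< -a}" by auto
    then show ?thesis using sym[of "{a<..}"] by simp
  qed
  also have "measure \<nu> {a<..} = 1 - cdf_of \<nu> a"
  proof -
    have "{a<..} = space \<nu> - {..a}" using sp by auto
    then show ?thesis using sb unfolding cdf_of_def
      by (simp add: prob_space.prob_compl[OF ps])
  qed
  finally show ?thesis by simp
qed

theorem lemma8:
  fixes \<alpha> a :: real and \<nu> :: "real measure" and M :: "'a measure" and X :: "nat \<Rightarrow> 'a \<Rightarrow> real"
  assumes "\<alpha> > 0"
    and "sym_prob \<nu>"
    and "measure \<nu> {0} = 0"
    and "a \<ge> 0"
    and "kendall_rw \<alpha> \<nu> M X"
  shows "measure M {\<omega>\<in>space M. weak_ladder a X \<omega> = 1} = cdf_of \<nu> a \<and>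
    (\<forall>n::nat. measure M {\<omega>\<in>space M. weak_ladder a X \<omega> > enat (n + 1)}
                 = (1 / 2 ^ n) * (1 - cdf_of \<nu> a))"
proof -
  have PM: "prob_space M" and Xm[measurable]: "\<And>n. X n \<in> borel_measurable M"
    and X0: "\<And>\<omega>. \<omega> \<in> space M \<Longrightarrow> X 0 \<omega> = 0"
    and rw: "\<And>n A B. (\<forall>i\<le>n. A i \<in> sets borel) \<Longrightarrow> B \<in> sets borel \<Longrightarrow>
        measure M {\<omega>\<in>space M. (\<forall>i\<le>n. X i \<omega> \<in> A i) \<and> X (Suc n) \<omega> \<in> B}
        = (\<integral>\<omega>. indicator {\<omega>\<in>space M. \<forall>i\<le>n. X i \<omega> \<in> A i} \<omega>
                 * kendall_kernel \<alpha> \<nu> (X n \<omega>) B \<partial>M)"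
    using assms(5)[unfolded kendall_rw_def]
    by simp_all
  have pn: "prob_space \<nu>" using assms(2) by (simp add: sym_prob_def)
  interpret prob_space M by (rule PM)
  define A :: "nat \<Rightarrow> real set" where "A i = (if i = 0 then UNIV else {a<..})" for i
  have Ab: "\<And>i. A i \<in> sets borel" by (simp add: A_def)
  define E where "E k = {\<omega>\<in>space M. \<forall>i\<le>k. X i \<omega> \<in> A i}" for k
  have Em: "E k \<in> sets M" for k
  proof -
    have "E k = {\<omega>\<in>space M. \<forall>i\<in>{..k}. X i \<omega> \<in> A i}" unfolding E_def by auto
    also have "\<dots> \<in> sets M"
    proof (rule sets.sets_Collect_finite_All)
      fix i show "{\<omega>\<in>space M. X i \<omega> \<in> A i} \<in> sets M"
        using measurable_sets[OF Xm Ab] by (simp add: Int_def conj_commute vimage_def)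
    qed simp
    finally show ?thesis .
  qed
  have Esuc: "E (Suc k) = {\<omega>\<in>space M. (\<forall>i\<le>k. X i \<omega> \<in> A i) \<and> X (Suc k) \<omega> \<in> {a<..}}" for k
    unfolding E_def by (auto simp: le_Suc_eq A_def)
  have E1: "measure M (E 1) = 1 - cdf_of \<nu> a"
  proof -
    have "measure M (E 1) = (\<integral>\<omega>. indicator (E 0) \<omega> * kendall_kernel \<alpha> \<nu> (X 0 \<omega>) {a<..} \<partial>M)"
      using rw[of 0 A "{a<..}"] Ab Esuc[of 0] unfolding E_def by simp
    also have "\<dots> = (\<integral>\<omega>. 1 - cdf_of \<nu> a \<partial>M)"
      by (intro Bochner_Integration.integral_cong)
         (auto simp: E_def A_def X0 kernel_zero assms(2,4))
    finally show ?thesis by (simp add: prob_space)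
  qed
  have En: "measure M (E (Suc n)) = (1 / 2 ^ n) * (1 - cdf_of \<nu> a)" for n
  proof (induction n)
    case 0 then show ?case using E1 by simp
  next
    case (Suc n)
    have "measure M (E (Suc (Suc n))) = (\<integral>\<omega>. indicator (E (Suc n)) \<omega> * kendall_kernel \<alpha> \<nu> (X (Suc n) \<omega>) {a<..} \<partial>M)"
      using rw[of "Suc n" A "{a<..}"] Ab Esuc[of "Suc n"] unfolding E_def by simp
    also have "\<dots> = (\<integral>\<omega>. indicator (E (Suc n)) \<omega> * (1/2) \<partial>M)"
    proof (intro Bochner_Integration.integral_cong refl)
      fix \<omega> assume "\<omega> \<in> space M"
      show "indicator (E (Suc n)) \<omega> * kendall_kernel \<alpha> \<nu> (X (Suc n) \<omega>) {a<..} = indicator (E (Suc n)) \<omega> * (1/2)"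
      proof (cases "\<omega> \<in> E (Suc n)")
        case True
        then have "a < X (Suc n) \<omega>" unfolding E_def A_def by auto
        then have "kendall_kernel \<alpha> \<nu> (X (Suc n) \<omega>) {a<..} = 1/2"
          using assms pn by (intro kernel_half) auto
        then show ?thesis by simp
      qed simp
    qed
    also have "\<dots> = measure M (E (Suc n)) / 2"
      using Em by simp
    finally show ?case using Suc by simp
  qed
  have Eform: "E k = {\<omega>\<in>space M. \<forall>i. 1 \<le> i \<and> i \<le> k \<longrightarrow> a < X i \<omega>}" for k
  proof -
    have "(\<forall>i\<le>k. X i \<omega> \<in> A i) \<longleftrightarrow> (\<forall>i. 1 \<le> i \<and> i \<le> k \<longrightarrow> a < X i \<omega>)" for \<omega>
    proof
      assume h: "\<forall>i\<le>k. X i \<omega> \<in> A i"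
      show "\<forall>i. 1 \<le> i \<and> i \<le> k \<longrightarrow> a < X i \<omega>"
      proof (intro allI impI)
        fix i assume i: "1 \<le> i \<and> i \<le> k"
        then have "X i \<omega> \<in> A i" using h by blast
        with i show "a < X i \<omega>" by (simp add: A_def)
      qed
    next
      assume h: "\<forall>i. 1 \<le> i \<and> i \<le> k \<longrightarrow> a < X i \<omega>"
      show "\<forall>i\<le>k. X i \<omega> \<in> A i"
      proof (intro allI impI)
        fix i assume i: "i \<le> k"
        show "X i \<omega> \<in> A i"
        proof (cases "i = 0")
          case True then show ?thesis by (simp add: A_def)
        next
          case False then show ?thesis using h i by (simp add: A_def)
        qed
      qed
    qed
    then show ?thesis unfolding E_def by simp
  qed
  have one: "(\<forall>i. 1 \<le> i \<and> i \<le> (1::nat) \<longrightarrow> a < X i \<omega>) \<longleftrightarrow> a < X 1 \<omega>" for \<omega>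
    by (metis le_antisym order_refl)
  have ev1: "{\<omega>\<in>space M. weak_ladder a X \<omega> = 1} = space M - E 1"
  proof -
    have wl: "weak_ladder a X \<omega> = 1 \<longleftrightarrow> X 1 \<omega> \<le> a" for \<omega>
    proof
      assume h: "X 1 \<omega> \<le> a"
      have "(LEAST n. n \<ge> 1 \<and> X n \<omega> \<le> a) = 1"
        by (rule Least_equality) (use h in auto)
      then show "weak_ladder a X \<omega> = 1" using h unfolding weak_ladder_def
        by (auto simp: one_enat_def)
    next
      assume h: "weak_ladder a X \<omega> = 1"
      then obtain m where m: "m \<ge> 1" "X m \<omega> \<le> a" and l: "(LEAST n. n \<ge> 1 \<and> X n \<omega> \<le> a) = 1"
        unfolding weak_ladder_def by (auto split: if_splits simp: one_enat_def)
      have "(1::nat) \<ge> 1 \<and> X 1 \<omega> \<le> a"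
        using LeastI[of "\<lambda>n. n \<ge> 1 \<and> X n \<omega> \<le> a" m] m l by simp
      then show "X 1 \<omega> \<le> a" by simp
    qed
    show ?thesis unfolding Eform one wl by (auto simp: not_less)
  qed
  have evn: "{\<omega>\<in>space M. weak_ladder a X \<omega> > enat (n + 1)} = E (Suc n)" for n
  proof -
    have key: "weak_ladder a X \<omega> > enat (n + 1) \<longleftrightarrow> (\<forall>i. 1 \<le> i \<and> i \<le> Suc n \<longrightarrow> a < X i \<omega>)" for \<omega>
    proof (cases "\<exists>k\<ge>1. X k \<omega> \<le> a")
      case True
      then obtain m where m: "m \<ge> 1" "X m \<omega> \<le> a" by auto
      define L where "L = (LEAST n. n \<ge> 1 \<and> X n \<omega> \<le> a)"
      have L: "L \<ge> 1" "X L \<omega> \<le> a" using LeastI[of "\<lambda>n. n \<ge> 1 \<and> X n \<omega> \<le> a" m] m by (auto simp: L_def)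
      have Lmin: "\<And>k. k \<ge> 1 \<Longrightarrow> X k \<omega> \<le> a \<Longrightarrow> L \<le> k" unfolding L_def by (rule Least_le) simp
      have wl: "weak_ladder a X \<omega> = enat L" using True unfolding weak_ladder_def L_def by simp
      have "L > n+1 \<longleftrightarrow> (\<forall>i. 1 \<le> i \<and> i \<le> Suc n \<longrightarrow> a < X i \<omega>)"
      proof
        assume Ln: "L > n+1"
        show "\<forall>i. 1 \<le> i \<and> i \<le> Suc n \<longrightarrow> a < X i \<omega>"
        proof (intro allI impI)
          fix i assume i: "1 \<le> i \<and> i \<le> Suc n"
          show "a < X i \<omega>"
          proof (rule ccontr)
            assume "\<not> a < X i \<omega>"
            then have "L \<le> i" using Lmin i by simp
            then show False using Ln i by simp
          qed
        qed
      next
        assume h: "\<forall>i. 1 \<le> i \<and> i \<le> Suc n \<longrightarrow> a < X i \<omega>"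
        show "L > n+1"
        proof (rule ccontr)
          assume "\<not> L > n+1"
          then have "a < X L \<omega>" using h L by simp
          then show False using L by simp
        qed
      qed
      then show ?thesis using wl by simp
    next
      case False
      then have wl: "weak_ladder a X \<omega> = \<infinity>" unfolding weak_ladder_def by simp
      have "\<forall>i. 1 \<le> i \<and> i \<le> Suc n \<longrightarrow> a < X i \<omega>" using False by (metis not_le)
      then show ?thesis by (simp add: wl)
    qed
    show ?thesis unfolding Eform key ..
  qed
  show ?thesis
  proof
    show "measure M {\<omega>\<in>space M. weak_ladder a X \<omega> = 1} = cdf_of \<nu> a"
      using ev1 prob_compl[OF Em[of 1]] E1 by simp
    show "\<forall>n::nat. measure M {\<omega>\<in>space M. weak_ladder a X \<omega> > enat (n + 1)}
                 = (1 / 2 ^ n) * (1 - cdf_of \<nu> a)"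
      using evn En by simp
  qed
qed

end
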